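(* Let $\mathcal C$ be a linear $[n,k]$ MDS code over $F$, and let $L\in\mathbb Z^+$ satisfy $$L<\max\left\{\binom{n-1}{k-1}\Big/\binom{\lceil (n+k)/2\rceil-2}{k-1},\;k\right\}+1,$$ where the ratio is interpreted as $+\infty$ if its denominator is $0$. If $\mathcal C$ is $L$-MDS, then $\mathcal C$ is $\ell$-MDS for every $\ell\in\{1,\dots,L\}$.
   Context: $F=\mathrm{GF}(q)$; $\mathsf w(\cdot)$ is Hamming weight. For $L\in\mathbb Z^+$ and nonnegative $\tau\in\frac{1}{L+1}\mathbb Z$, a code $\mathcal C\subseteq F^n$ is strongly-$(\tau,L)$-list decodable if there do not exist $y\in F^n$ and $L+1$ distinct codewords $c_0,\dots,c_L\in\mathcal C$ with $\sum_{m=0}^{L}\mathsf w(y-c_m)\le(L+1)\tau$. A linear $[n,k]$ code over $F$ is called $L$-MDS if it is strongly-$\left(\frac{L(n-k)}{L+1},L\right)$-list decodable; equivalently, any $L+1$ distinct vectors lying in a common coset of the code have total Hamming weight greater than $L(n-k)$. (1-MDS coincides with MDS.) *)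

theory Defs
  imports "HOL-Analysis.Cartesian_Space"
begin

text \<open>Codes of length n over a finite field F are subsets of F^n, rendered as
  vectors of type 'a^'n with 'a a finite field and n = CARD('n).\<close>

definition hamming_weight :: "'a::zero ^ 'n \<Rightarrow> nat" where
  "hamming_weight x = card {i. x $ i \<noteq> 0}"

definition linear_code :: "('a::field ^ 'n) set \<Rightarrow> nat \<Rightarrow> bool" where
  "linear_code C k \<longleftrightarrow> vec.subspace C \<and> vec.dim C = k"

definition MDS_code :: "('a::field ^ 'n) set \<Rightarrow> nat \<Rightarrow> bool" where
  "MDS_code C k \<longleftrightarrow> linear_code C k \<and>
     (\<forall>c\<in>C. c \<noteq> 0 \<longrightarrow> hamming_weight c \<ge> CARD('n) - k + 1)"

definition strongly_list_decodable :: "('a::field ^ 'n) set \<Rightarrow> real \<Rightarrow> nat \<Rightarrow> bool" where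
  "strongly_list_decodable C \<tau> L \<longleftrightarrow>
     \<not> (\<exists>(y::'a^'n) (c::nat \<Rightarrow> 'a^'n).
           inj_on c {0..L} \<and> c ` {0..L} \<subseteq> C \<and>
           (\<Sum>m=0..L. real (hamming_weight (y - c m))) \<le> (real L + 1) * \<tau>)"

definition L_MDS :: "('a::field ^ 'n) set \<Rightarrow> nat \<Rightarrow> nat \<Rightarrow> bool" where
  "L_MDS C k L \<longleftrightarrow> linear_code C k \<and>
     strongly_list_decodable C (real L * (real CARD('n) - real k) / (real L + 1)) L"

end

theory Submission
  imports Defs
begin


lemma binom_top_mono: "a \<le> b \<Longrightarrow> (a choose j) \<le> (b choose (j::nat))"
proof -
  assume ab: "a \<le> b"
  have "(a choose j) = card {B. B \<subseteq> {..<a} \<and> card B = j}" by (simp add: n_subsets)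
  also have "\<dots> \<le> card {B. B \<subseteq> {..<b} \<and> card B = j}"
    by (rule card_mono) (use ab in \<open>auto\<close>)
  also have "\<dots> = (b choose j)" by (simp add: n_subsets)
  finally show ?thesis .
qed

lemma binom_ineq_aux: "(a+1) * ((a+f) choose a) \<le> ((a+2*f+1) choose (a::nat))"
proof (induction a)
  case 0
  then show ?case by simp
next
  case (Suc a)
  define P where "P = (a+f) choose a"
  define Q where "Q = (a+2*f+1) choose a"
  define X where "X = (Suc a+f) choose (Suc a)"
  define Y where "Y = (Suc a+2*f+1) choose (Suc a)"
  have IH: "(a+1)*P \<le> Q" using Suc.IH by (simp add: P_def Q_def)
  have eX: "(a+1)*X = (a+1+f)*P"
    using Suc_times_binomial[of a "a+f"] by (simp add: X_def P_def)
  have eY: "(a+1)*Y = (a+2*f+2)*Q"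
    using Suc_times_binomial[of a "a+2*f+1"] by (simp add: Y_def Q_def)
  have "(a+1)*((a+2)*X) = (a+2)*((a+1+f)*P)" using eX by (metis mult.left_commute)
  also have "\<dots> \<le> (a+2*f+2)*((a+1)*P)"
  proof -
    have "(a+2)*(a+1+f) \<le> (a+2*f+2)*(a+1)" by (simp add: algebra_simps)
    then have "(a+2)*(a+1+f)*P \<le> (a+2*f+2)*(a+1)*P" by (rule mult_right_mono) simp
    then show ?thesis by (simp only: mult.assoc)
  qed
  also have "\<dots> \<le> (a+2*f+2)*Q" using IH by (rule mult_left_mono) simp
  also have "\<dots> = (a+1)*Y" using eY by simp
  finally have "(a+1)*((a+2)*X) \<le> (a+1)*Y" .
  then have "(a+2)*X \<le> Y" by (simp only: mult_le_cancel1)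
  then show ?case by (simp add: X_def Y_def)
qed



lemma binom_key:
  assumes "1 \<le> k" "k < n"
  shows "k * (((n+k+1) div 2 - 2) choose (k-1)) \<le> (n-1) choose (k-1)"
proof -
  define a where "a = k - 1"
  define f where "f = (n-k+1) div 2 - 1"
  have e1: "(n+k+1) div 2 - 2 = a + f" using assms unfolding a_def f_def by linarith
  have e2: "a + 2*f + 1 \<le> n - 1" using assms unfolding a_def f_def by linarith
  have "k * (((n+k+1) div 2 - 2) choose (k-1)) = (a+1) * ((a+f) choose a)"
    unfolding e1 using assms by (simp add: a_def)
  also have "\<dots> \<le> (a+2*f+1) choose a" by (rule binom_ineq_aux)
  also have "\<dots> \<le> (n-1) choose a" by (rule binom_top_mono[OF e2])
  finally show ?thesis by (simp add: a_def)
qed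

lemma hw_triangle:
  fixes a b y :: "'a::{ab_group_add} ^ 'n"
  shows "hamming_weight (a - b) \<le> hamming_weight (y - a) + hamming_weight (y - b)"
proof -
  have "{i. (a - b) $ i \<noteq> 0} \<subseteq> {i. (y - a) $ i \<noteq> 0} \<union> {i. (y - b) $ i \<noteq> 0}"
    by auto
  then have "card {i. (a - b) $ i \<noteq> 0} \<le> card ({i. (y - a) $ i \<noteq> 0} \<union> {i. (y - b) $ i \<noteq> 0})"
    by (rule card_mono[rotated]) simp
  also have "\<dots> \<le> card {i. (y - a) $ i \<noteq> 0} + card {i. (y - b) $ i \<noteq> 0}" by (rule card_Un_le)
  finally show ?thesis unfolding hamming_weight_def .
qed

lemma hw_zeros:
  fixes x :: "'a::zero ^ 'n"
  shows "card {i. x $ i = 0} = CARD('n) - hamming_weight x"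
proof -
  have "{i. x $ i = 0} = UNIV - {i. x $ i \<noteq> 0}" by auto
  then show ?thesis unfolding hamming_weight_def by (simp add: card_Diff_subset)
qed

lemma hw_le_zeros:
  fixes x :: "'a::zero ^ 'n"
  assumes "T \<subseteq> {i. x $ i = 0}"
  shows "hamming_weight x \<le> CARD('n) - card T"
proof -
  have "card T \<le> card {i. x $ i = 0}" using assms by (rule card_mono[rotated]) simp
  moreover have "hamming_weight x \<le> CARD('n)" unfolding hamming_weight_def by (rule card_mono) auto
  ultimately show ?thesis using hw_zeros[of x] by linarith
qed

lemma mds_dist:
  fixes C :: "('a::field ^ 'n) set"
  assumes "MDS_code C k" "a \<in> C" "b \<in> C" "a \<noteq> b"
  shows "CARD('n) - k + 1 \<le> hamming_weight (a - b)"
proof -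
  have "vec.subspace C" using assms(1) unfolding MDS_code_def linear_code_def by blast
  then have "a - b \<in> C" using assms by (simp add: vec.subspace_diff)
  then show ?thesis using assms unfolding MDS_code_def by auto
qed

lemma hw_zero_iff: "hamming_weight (x::'a::zero^'n) = 0 \<longleftrightarrow> x = 0"
  unfolding hamming_weight_def by (auto simp: vec_eq_iff)

lemma agree_unique:
  fixes C :: "('a::field ^ 'n) set"
  assumes "MDS_code C k" "card T = k" "a \<in> C" "b \<in> C" "\<forall>j\<in>T. a $ j = b $ j"
  shows "a = b"
proof (rule ccontr)
  assume "a \<noteq> b"
  then have "CARD('n) - k + 1 \<le> hamming_weight (a - b)" using mds_dist assms by blast
  moreover have "hamming_weight (a - b) \<le> CARD('n) - card T"
    by (rule hw_le_zeros) (use assms in auto)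
  ultimately show False using assms by simp
qed

definition projT :: "'n set \<Rightarrow> 'a::field ^ 'n \<Rightarrow> 'a ^ 'n" where
  "projT T x = (\<chi> j. if j \<in> T then x $ j else 0)"

lemma projT_linear: "Vector_Spaces.linear (*s) (*s) (projT T)"
  unfolding Vector_Spaces.linear_iff projT_def
  by (simp add: vec_eq_iff vec.vector_space_axioms)

lemma agree_exists:
  fixes C :: "('a::field ^ 'n) set"
  assumes mds: "MDS_code C k" and cT: "card T = k"
  shows "\<exists>c\<in>C. \<forall>j\<in>T. c $ j = y $ j"
proof -
  have sub: "vec.subspace C" and dC: "vec.dim C = k"
    using mds unfolding MDS_code_def linear_code_def by blast+
  define W where "W = {x::'a^'n. \<forall>i. i \<notin> T \<longrightarrow> x$i = 0}"
  have subW: "vec.subspace W" unfolding W_def vec.subspace_def by auto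
  have dW: "vec.dim W = k" unfolding W_def using dim_substandard_cart[of T, where 'a='a] cT by simp
  have inj: "inj_on (projT T) (vec.span C)"
  proof (rule inj_onI)
    fix a b assume "a \<in> vec.span C" "b \<in> vec.span C" and eq: "projT T a = projT T b"
    have spanC: "vec.span C = C" by (rule vec.span_eq_iff[THEN iffD2, OF sub])
    then have ab: "a \<in> C" "b \<in> C" using \<open>a \<in> vec.span C\<close> \<open>b \<in> vec.span C\<close> by (simp_all only: spanC)
    have "\<forall>j\<in>T. a $ j = b $ j"
    proof
      fix j assume "j \<in> T"
      then show "a $ j = b $ j" using arg_cong[OF eq, of "\<lambda>v. v $ j"] by (simp add: projT_def)
    qed
    then show "a = b" using agree_unique[OF mds cT ab] by blast
  qed
  have dimP: "vec.dim (projT T ` C) = k"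
    using vec.dim_image_eq[OF projT_linear inj] dC by simp
  have subP: "vec.subspace (projT T ` C)"
    using vec.linear_subspace_image[OF projT_linear sub] .
  have PW: "projT T ` C \<subseteq> W" unfolding W_def projT_def by auto
  have "projT T ` C = W" by (rule vec.subspace_dim_equal[OF subP subW PW]) (simp add: dimP dW)
  moreover have "projT T y \<in> W" unfolding W_def projT_def by auto
  ultimately obtain c where "c \<in> C" and ceq: "projT T c = projT T y" by auto
  have "\<forall>j\<in>T. c $ j = y $ j"
  proof
    fix j assume "j \<in> T"
    then show "c $ j = y $ j" using arg_cong[OF ceq, of "\<lambda>v. v $ j"] by (simp add: projT_def)
  qed
  then show ?thesis using \<open>c \<in> C\<close> by blast
qed



lemma card_subsets_with:
  assumes fin: "finite A" and iA: "i \<in> A" and k1: "1 \<le> k"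
  shows "card {T. T \<subseteq> A \<and> i \<in> T \<and> card T = k} = (card A - 1) choose (k - 1)"
proof -
  let ?U = "{U. U \<subseteq> A - {i} \<and> card U = k - 1}"
  have img: "{T. T \<subseteq> A \<and> i \<in> T \<and> card T = k} = insert i ` ?U"
  proof (rule set_eqI, rule iffI)
    fix T assume "T \<in> {T. T \<subseteq> A \<and> i \<in> T \<and> card T = k}"
    then have T: "T \<subseteq> A" "i \<in> T" "card T = k" by auto
    have "finite T" using T(1) fin finite_subset by blast
    then have "card (T - {i}) = k - 1" using T by simp
    moreover have "T = insert i (T - {i})" using T by auto
    ultimately show "T \<in> insert i ` ?U" using T by blast
  next
    fix T assume "T \<in> insert i ` ?U"
    then obtain U where U: "U \<subseteq> A - {i}" "card U = k - 1" and TU: "T = insert i U" by auto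
    have "finite U" using U(1) fin finite_subset by blast
    moreover have "i \<notin> U" using U by auto
    ultimately have "card T = k" using TU U k1 by simp
    then show "T \<in> {T. T \<subseteq> A \<and> i \<in> T \<and> card T = k}" using TU U iA by auto
  qed
  have inj: "inj_on (insert i) ?U"
  proof (rule inj_onI)
    fix U V assume "U \<in> ?U" "V \<in> ?U" "insert i U = insert i V"
    then show "U = V" by (metis (no_types, lifting) Diff_insert_absorb insert_Diff
        mem_Collect_eq subset_Diff_insert)
  qed
  have "card {T. T \<subseteq> A \<and> i \<in> T \<and> card T = k} = card ?U"
    unfolding img by (rule card_image[OF inj])
  also have "\<dots> = card (A - {i}) choose (k - 1)" by (rule n_subsets) (use fin in simp)
  also have "card (A - {i}) = card A - 1" using iA fin by simp
  finally show ?thesis .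
qed

lemma extend_config:
  fixes C :: "('a::field ^ 'n) set" and c :: "nat \<Rightarrow> 'a ^ 'n"
  assumes inj: "inj_on c {0..l}" and cC: "c ` {0..l} \<subseteq> C" and lL: "l \<le> L"
    and sm: "(\<Sum>m=0..l. hamming_weight (y - c m)) \<le> l * d"
    and finB: "finite B" and BC: "B \<subseteq> C" and Bw: "\<forall>b\<in>B. hamming_weight (y - b) \<le> d"
    and cardB: "L + 1 \<le> card B"
  shows "\<exists>c'. inj_on c' {0..L} \<and> c' ` {0..L} \<subseteq> C \<and>
           (\<Sum>m=0..L. hamming_weight (y - c' m)) \<le> L * d"
proof -
  define B' where "B' = B - c ` {0..l}"
  have "card B - card (c ` {0..l}) \<le> card B'" unfolding B'_def
    by (rule diff_card_le_card_Diff) simp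
  moreover have "card (c ` {0..l}) = l + 1" using card_image[OF inj] by simp
  ultimately have cB': "card {Suc l..L} \<le> card B'" using cardB by simp
  have "finite B'" using finB B'_def by simp
  then obtain g where g: "g ` {Suc l..L} \<subseteq> B'" "inj_on g {Suc l..L}"
    using card_le_inj[OF _ _ cB'] by auto
  define c' where "c' = (\<lambda>m. if m \<le> l then c m else g m)"
  have "inj_on c' {0..L}"
  proof (rule inj_onI)
    fix a b assume a: "a \<in> {0..L}" and b: "b \<in> {0..L}" and eq: "c' a = c' b"
    show "a = b"
    proof (cases "a \<le> l"; cases "b \<le> l")
      assume "a \<le> l" "b \<le> l" then show ?thesis using eq inj by (auto simp: c'_def inj_on_def)
    next
      assume "\<not> a \<le> l" "\<not> b \<le> l" then show ?thesis using eq g a b by (auto simp: c'_def inj_on_def)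
    next
      assume "a \<le> l" "\<not> b \<le> l"
      then have "g b \<in> B'" using g b by auto
      moreover have "c' b = g b" "c' a = c a" using \<open>a \<le> l\<close> \<open>\<not> b \<le> l\<close> by (auto simp: c'_def)
      moreover have "c a \<in> c ` {0..l}" using \<open>a \<le> l\<close> by auto
      ultimately show ?thesis using eq unfolding B'_def by auto
    next
      assume "\<not> a \<le> l" "b \<le> l"
      then have "g a \<in> B'" using g a by auto
      moreover have "c' a = g a" "c' b = c b" using \<open>\<not> a \<le> l\<close> \<open>b \<le> l\<close> by (auto simp: c'_def)
      moreover have "c b \<in> c ` {0..l}" using \<open>b \<le> l\<close> by auto
      ultimately show ?thesis using eq unfolding B'_def by auto
    qed
  qed
  moreover have "c' ` {0..L} \<subseteq> C"
  proof
    fix x assume "x \<in> c' ` {0..L}"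
    then obtain m where m: "m \<in> {0..L}" "x = c' m" by auto
    show "x \<in> C"
    proof (cases "m \<le> l")
      case True then show ?thesis using m cC by (auto simp: c'_def)
    next
      case False then have "g m \<in> B'" using g m by auto
      then show ?thesis using m False BC B'_def by (auto simp: c'_def)
    qed
  qed
  moreover have "(\<Sum>m=0..L. hamming_weight (y - c' m)) \<le> L * d"
  proof -
    have split: "{0..L} = {0..l} \<union> {Suc l..L}" using lL by auto
    have "(\<Sum>m=0..L. hamming_weight (y - c' m)) =
          (\<Sum>m=0..l. hamming_weight (y - c' m)) + (\<Sum>m=Suc l..L. hamming_weight (y - c' m))"
      unfolding split by (rule sum.union_disjoint) auto
    also have "(\<Sum>m=0..l. hamming_weight (y - c' m)) = (\<Sum>m=0..l. hamming_weight (y - c m))"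
      by (rule sum.cong) (auto simp: c'_def)
    also have "(\<Sum>m=Suc l..L. hamming_weight (y - c' m)) \<le> card {Suc l..L} * d"
    proof -
      have "\<And>m. m \<in> {Suc l..L} \<Longrightarrow> hamming_weight (y - c' m) \<le> d"
      proof -
        fix m assume m: "m \<in> {Suc l..L}"
        then have "g m \<in> g ` {Suc l..L}" by blast
        then have "g m \<in> B" using g B'_def by blast
        then show "hamming_weight (y - c' m) \<le> d" using Bw m by (auto simp: c'_def)
      qed
      then show ?thesis using sum_bounded_above[of "{Suc l..L}" "\<lambda>m. hamming_weight (y - c' m)" d]
        by simp
    qed
    finally have "(\<Sum>m=0..L. hamming_weight (y - c' m)) \<le> l * d + (L - l) * d" using sm by simp
    also have "\<dots> = L * d" using lL by (simp add: add_mult_distrib[symmetric])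
    finally show ?thesis .
  qed
  ultimately show ?thesis by blast
qed



lemma y_notin_C:
  fixes C :: "('a::field ^ 'n) set" and c :: "nat \<Rightarrow> 'a ^ 'n"
  assumes mds: "MDS_code C k" and inj: "inj_on c {0..l}" and cC: "c ` {0..l} \<subseteq> C"
    and l1: "1 \<le> l" and sm: "(\<Sum>m=0..l. hamming_weight (y - c m)) \<le> l * (CARD('n) - k)"
  shows "y \<notin> C"
proof
  assume yC: "y \<in> C"
  define M where "M = {m\<in>{0..l}. c m \<noteq> y}"
  have fin: "finite M" unfolding M_def by simp
  have "card ({0..l} - M) \<le> Suc 0"
  proof (subst card_le_Suc0_iff_eq, simp, intro ballI)
    fix a b assume "a \<in> {0..l} - M" "b \<in> {0..l} - M"
    then have "c a = c b" "a \<in> {0..l}" "b \<in> {0..l}" unfolding M_def by auto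
    then show "a = b" using inj by (auto simp: inj_on_def)
  qed
  moreover have Msub: "M \<subseteq> {0..l}" unfolding M_def by auto
  moreover have "card ({0..l} - M) = card {0..l} - card M" by (rule card_Diff_subset[OF fin Msub])
  moreover have "card M \<le> card {0..l}" by (rule card_mono) (simp, rule Msub)
  ultimately have cM: "l \<le> card M" by simp
  have "l * (CARD('n) - k + 1) \<le> card M * (CARD('n) - k + 1)" using cM by (rule mult_right_mono) simp
  also have "\<dots> \<le> (\<Sum>m\<in>M. hamming_weight (y - c m))"
  proof -
    have "\<And>m. m \<in> M \<Longrightarrow> CARD('n) - k + 1 \<le> hamming_weight (y - c m)"
      using mds_dist[OF mds yC] cC unfolding M_def by (metis (mono_tags, lifting) image_subset_iff mem_Collect_eq)
    then show ?thesis using sum_bounded_below[of M "CARD('n) - k + 1" "\<lambda>m. hamming_weight (y - c m)"] by simp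
  qed
  also have "\<dots> \<le> (\<Sum>m=0..l. hamming_weight (y - c m))"
    by (rule sum_mono2) (auto simp: M_def)
  finally have "l * (CARD('n) - k + 1) \<le> l * (CARD('n) - k)" using sm by linarith
  then show False using l1 by simp
qed

lemma ball_big:
  fixes C :: "('a::{finite,field} ^ 'n) set" and c :: "nat \<Rightarrow> 'a ^ 'n"
  assumes mds: "MDS_code C k" and k1: "1 \<le> k" and kn: "k < CARD('n)"
    and yC: "y \<notin> C"
  defines "B \<equiv> {b\<in>C. hamming_weight (y - b) \<le> CARD('n) - k}"
  shows "k + 1 \<le> card B \<and>
    real ((CARD('n) - 1) choose (k - 1)) / real (((CARD('n) + k + 1) div 2 - 2) choose (k - 1)) + 1
      \<le> real (card B)"
proof -
  define n where "n = CARD('n)"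
  define d where "d = n - k"
  have finC: "finite C" by simp
  have finB: "finite B" unfolding B_def by simp
  obtain T0 :: "'n set" where T0: "card T0 = k" using obtain_subset_with_card_n[of k "UNIV :: 'n set"] kn by auto
  obtain c1 where c1: "c1 \<in> C" "\<forall>j\<in>T0. c1 $ j = y $ j" using agree_exists[OF mds T0] by blast
  have "hamming_weight (y - c1) \<le> n - card T0" unfolding n_def by (rule hw_le_zeros) (use c1 in auto)
  then have c1B: "c1 \<in> B" unfolding B_def n_def using c1 T0 by simp
  obtain c0 where c0B: "c0 \<in> B" and c0min: "\<forall>b. b \<in> B \<longrightarrow> hamming_weight (y - c0) \<le> hamming_weight (y - b)"
    using ex_has_least_nat[of "\<lambda>b. b \<in> B" c1 "\<lambda>b. hamming_weight (y - b)"] c1B by blast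
  have c0C: "c0 \<in> C" using c0B B_def by simp
  have "y \<noteq> c0" using yC c0C by auto
  then obtain i where i: "(y - c0) $ i \<noteq> 0" by (metis eq_iff_diff_eq_0 vec_eq_iff zero_index)
  have far: "d div 2 + 1 \<le> hamming_weight (y - b)" if bC: "b \<in> C" and bne: "b \<noteq> c0" for b
  proof (rule ccontr)
    assume "\<not> d div 2 + 1 \<le> hamming_weight (y - b)"
    then have wb: "hamming_weight (y - b) \<le> d div 2" by simp
    then have "b \<in> B" unfolding B_def using bC d_def n_def by auto
    then have "hamming_weight (y - c0) \<le> d div 2" using c0min wb by fastforce
    then have "hamming_weight (b - c0) \<le> d" using hw_triangle[of b c0 y] wb by linarith
    moreover have "n - k + 1 \<le> hamming_weight (b - c0)" unfolding n_def using mds_dist[OF mds bC c0C bne] .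
    ultimately show False unfolding d_def by simp
  qed
  define S where "S = {b\<in>C. b \<noteq> c0 \<and> (y - b) $ i = 0 \<and> hamming_weight (y - b) \<le> d}"
  have finS: "finite S" unfolding S_def by simp
  have sub0: "insert c0 S \<subseteq> B" using c0B unfolding S_def B_def d_def n_def by auto
  have c0S: "c0 \<notin> S" unfolding S_def by simp
  have "card (insert c0 S) \<le> card B" by (rule card_mono[OF finB sub0])
  then have cardBS: "card S + 1 \<le> card B" using finS c0S by simp
  define TT where "TT = {T. T \<subseteq> (UNIV :: 'n set) \<and> i \<in> T \<and> card T = k}"
  define G where "G = (\<lambda>b. {T. T \<subseteq> {j. (y - b) $ j = 0} \<and> i \<in> T \<and> card T = k})"
  have cardTT: "card TT = (n - 1) choose (k - 1)"
    unfolding TT_def n_def using card_subsets_with[of "UNIV::'n set" i k] k1 by simp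
  have TTsub: "TT \<subseteq> (\<Union>b\<in>S. G b)"
  proof
    fix T assume "T \<in> TT"
    then have T: "i \<in> T" "card T = k" unfolding TT_def by auto
    obtain b where b: "b \<in> C" "\<forall>j\<in>T. b $ j = y $ j" using agree_exists[OF mds T(2)] by blast
    have zer: "T \<subseteq> {j. (y - b) $ j = 0}" using b by auto
    have "hamming_weight (y - b) \<le> n - card T" unfolding n_def by (rule hw_le_zeros[OF zer])
    then have wb: "hamming_weight (y - b) \<le> d" using T unfolding d_def by simp
    have "(y - b) $ i = 0" using zer T by auto
    moreover then have "b \<noteq> c0" using i by auto
    ultimately have "b \<in> S" unfolding S_def using b wb by auto
    moreover have "T \<in> G b" unfolding G_def using zer T by auto
    ultimately show "T \<in> (\<Union>b\<in>S. G b)" by blast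
  qed
  define den where "den = ((n + k + 1) div 2 - 2) choose (k - 1)"
  define num where "num = (n - 1) choose (k - 1)"
  have Gb: "card (G b) \<le> den" if bS: "b \<in> S" for b
  proof -
    have bC: "b \<in> C" "b \<noteq> c0" "(y - b) $ i = 0" using bS unfolding S_def by auto
    have "card (G b) = (card {j. (y - b) $ j = 0} - 1) choose (k - 1)"
      unfolding G_def by (rule card_subsets_with[OF _ _ k1]) (use bC in auto)
    also have "card {j. (y - b) $ j = 0} = n - hamming_weight (y - b)" unfolding n_def by (rule hw_zeros)
    also have "(n - hamming_weight (y - b) - 1) choose (k - 1) \<le> den" unfolding den_def
    proof (rule binom_top_mono)
      have "d div 2 + 1 \<le> hamming_weight (y - b)" using far bC by blast
      then show "n - hamming_weight (y - b) - 1 \<le> (n + k + 1) div 2 - 2"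
        using kn k1 unfolding d_def n_def by linarith
    qed
    finally show ?thesis .
  qed
  have "num \<le> card (\<Union>b\<in>S. G b)" unfolding num_def using cardTT TTsub card_mono
    by (metis finite_UN_I finite_subset finS finite_Collect_subsets finite)
  also have "\<dots> \<le> (\<Sum>b\<in>S. card (G b))" by (rule card_UN_le[OF finS])
  also have "\<dots> \<le> card S * den" using sum_bounded_above[of S "\<lambda>b. card (G b)" den] Gb by simp
  finally have numS: "num \<le> card S * den" .
  have denpos: "0 < den" unfolding den_def
    by (rule zero_less_binomial) (use kn k1 in \<open>unfold n_def; linarith\<close>)
  have "k * den \<le> num" unfolding den_def num_def n_def by (rule binom_key[OF k1 kn])
  then have "k * den \<le> card S * den" using numS by linarith
  then have kS: "k \<le> card S" using denpos by simp
  have "real num \<le> real (card S) * real den" using numS by (metis of_nat_le_iff of_nat_mult)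
  then have "real num / real den \<le> real (card S)" using denpos by (simp add: divide_le_eq)
  then show ?thesis using kS cardBS unfolding num_def den_def n_def by linarith
qed



theorem mainTheorem9:
  fixes C :: "('a::{finite,field} ^ 'n) set" and k L :: nat
  assumes mds: "MDS_code C k"
    and Lpos: "L \<ge> 1"
    and Lbound: "let n = CARD('n);
                     num = (if k = 0 then 0 else (n - 1) choose (k - 1));
                     den = (if k = 0 then 0 else ((n + k + 1) div 2 - 2) choose (k - 1))
                 in den = 0 \<or> real L < max (real num / real den) (real k) + 1"
    and LMDS: "L_MDS C k L"
  shows "\<forall>l\<in>{1..L}. L_MDS C k l"
proof
  fix l assume lL: "l \<in> {1..L}"
  have lin: "linear_code C k" using mds unfolding MDS_code_def by blast
  show "L_MDS C k l"
  proof (rule ccontr)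
    assume "\<not> L_MDS C k l"
    then obtain y c where inj: "inj_on c {0..l}" and cC: "c ` {0..l} \<subseteq> C"
      and sr: "(\<Sum>m=0..l. real (hamming_weight (y - c m))) \<le>
               (real l + 1) * (real l * (real CARD('n) - real k) / (real l + 1))"
      using lin unfolding L_MDS_def strongly_list_decodable_def by blast
    have l1: "1 \<le> l" "l \<le> L" using lL by auto
    have sr2: "(\<Sum>m=0..l. real (hamming_weight (y - c m))) \<le> real l * (real CARD('n) - real k)"
    proof -
      have "(real l + 1) * (real l * (real CARD('n) - real k) / (real l + 1)) = real l * (real CARD('n) - real k)"
        using add_pos_nonneg[OF zero_less_one of_nat_0_le_iff[of l]] by (simp add: field_simps)
      then show ?thesis using sr by simp
    qed
    have c01: "0 \<in> {0..l}" "1 \<in> {0..l}" using l1 by auto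
    have cne: "c 0 \<noteq> c 1" using inj c01 by (metis inj_on_contraD zero_neq_one)
    have c0C: "c 0 \<in> C" and c1C: "c 1 \<in> C" using cC c01 by auto
    show False
    proof (cases "CARD('n) \<le> k")
      case True
      then have "(\<Sum>m=0..l. real (hamming_weight (y - c m))) \<le> 0"
        using sr2 by (smt (verit) mult_nonneg_nonpos of_nat_0_le_iff of_nat_le_iff)
      then have "(\<Sum>m=0..l. real (hamming_weight (y - c m))) = 0"
        by (meson antisym sum_nonneg of_nat_0_le_iff)
      then have "\<forall>m\<in>{0..l}. real (hamming_weight (y - c m)) = 0"
        by (subst (asm) sum_nonneg_eq_0_iff) auto
      then have "hamming_weight (y - c 0) = 0" "hamming_weight (y - c 1) = 0" using c01 by auto
      then have "c 0 = c 1" by (simp add: hw_zero_iff)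
      then show False using cne by simp
    next
      case False
      then have kn: "k < CARD('n)" by simp
      show False
      proof (cases "k = 0")
        case True
        have z: "x = 0" if "x \<in> C" for x
        proof (rule ccontr)
          assume "x \<noteq> 0"
          then have "CARD('n) + 1 \<le> hamming_weight x" using mds that True unfolding MDS_code_def by auto
          moreover have "hamming_weight x \<le> CARD('n)" unfolding hamming_weight_def by (rule card_mono) auto
          ultimately show False by simp
        qed
        show False using z[OF c0C] z[OF c1C] cne by simp
      next
        case False
        then have k1: "1 \<le> k" by simp
        have sm: "(\<Sum>m=0..l. hamming_weight (y - c m)) \<le> l * (CARD('n) - k)"
        proof -
          have "real (\<Sum>m=0..l. hamming_weight (y - c m)) \<le> real (l * (CARD('n) - k))"
            using sr2 kn by (simp add: of_nat_diff)
          then show ?thesis by (simp only: of_nat_le_iff)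
        qed
        have yC: "y \<notin> C" by (rule y_notin_C[OF mds inj cC l1(1) sm])
        define B where "B = {b\<in>C. hamming_weight (y - b) \<le> CARD('n) - k}"
        define num where "num = (CARD('n) - 1) choose (k - 1)"
        define den where "den = ((CARD('n) + k + 1) div 2 - 2) choose (k - 1)"
        have bb: "k + 1 \<le> card B" "real num / real den + 1 \<le> real (card B)"
          using ball_big[OF mds k1 kn yC] unfolding B_def num_def den_def by auto
        have "k - 1 \<le> (CARD('n) + k + 1) div 2 - 2" using kn k1 by linarith
        then have denpos: "den \<noteq> 0" unfolding den_def by simp
        have "real L < max (real num / real den) (real k) + 1"
          using Lbound denpos False unfolding Let_def num_def den_def by auto
        then have "real L < real (card B)" using bb by linarith
        then have LB: "L + 1 \<le> card B" by linarith
        have Bp: "finite B" "B \<subseteq> C" "\<forall>b\<in>B. hamming_weight (y - b) \<le> CARD('n) - k"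
          unfolding B_def by auto
        obtain c' where c': "inj_on c' {0..L}" "c' ` {0..L} \<subseteq> C"
          "(\<Sum>m=0..L. hamming_weight (y - c' m)) \<le> L * (CARD('n) - k)"
          using extend_config[OF inj cC l1(2) sm Bp LB] by blast
        have "(\<Sum>m=0..L. real (hamming_weight (y - c' m))) \<le>
               (real L + 1) * (real L * (real CARD('n) - real k) / (real L + 1))"
        proof -
          have "(real L + 1) * (real L * (real CARD('n) - real k) / (real L + 1)) = real L * (real CARD('n) - real k)"
            using add_pos_nonneg[OF zero_less_one of_nat_0_le_iff[of L]] by (simp add: field_simps)
          also have "\<dots> = real (L * (CARD('n) - k))" using kn by (simp add: of_nat_diff)
          finally show ?thesis using c'(3) by (metis of_nat_le_iff of_nat_sum)
        qed
        then show False using LMDS c'(1,2) unfolding L_MDS_def strongly_list_decodable_def by blast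
      qed
    qed
  qed
qed


end
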